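(* Let $n\geq 4$ and $\alpha_2,\dots,\alpha_n\in\mathbb{C}$ with $\alpha_2=\alpha_3=0$ and $\alpha_4\neq0$. Then the transposed Poisson algebra $\mathbf{TP}(\alpha_2,\dots,\alpha_n)$ is isomorphic to $\mathbf{TP}(0,0,1,\alpha,0,\dots,0)$ for some $\alpha\in\mathbb{C}$, i.e. to the algebra with parameters $\alpha_4'=1$, $\alpha_5'=\alpha$ (present only when $n\geq5$), and all other $\alpha_i'=0$.
   Context: $\mu_0^n$ is the complex commutative associative algebra with basis $\{e_1,\dots,e_n\}$ and $e_i\cdot e_j=e_{i+j}$ for $2\leq i+j\leq n$, other products zero. For $\alpha_2,\dots,\alpha_n\in\mathbb{C}$, $\mathbf{TP}(\alpha_2,\dots,\alpha_n)$ denotes $\mu_0^n$ with its associative product together with the bracket $[e_i,e_j]=(j-i)\sum_{t=i+j-1}^{n}\alpha_{t-i-j+3}e_t$ for $3\leq i+j\leq n+1$, other brackets of basis elements zero. Isomorphisms preserve both operations. *)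

theory Defs
  imports Complex_Main
begin

text \<open>Elements of the n-dimensional algebra: coordinate functions x :: nat => complex,
  x t = coefficient of e_t, supported on {1..n}.\<close>

definition vspace :: "nat \<Rightarrow> (nat \<Rightarrow> complex) set" where
  "vspace n = {x. \<forall>t. t \<notin> {1..n} \<longrightarrow> x t = 0}"

text \<open>Associative product of mu_0^n: e_i e_j = e_(i+j) if i+j <= n, else 0.\<close>
definition mu_prod :: "nat \<Rightarrow> (nat \<Rightarrow> complex) \<Rightarrow> (nat \<Rightarrow> complex) \<Rightarrow> (nat \<Rightarrow> complex)" where
  "mu_prod n x y = (\<lambda>t. if t \<in> {1..n} then
      (\<Sum>i\<in>{1..n}. \<Sum>j\<in>{1..n}. if i + j = t then x i * y j else 0) else 0)"

text \<open>Structure constant: coefficient of e_t in [e_i,e_j].\<close>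
definition tp_const :: "nat \<Rightarrow> (nat \<Rightarrow> complex) \<Rightarrow> nat \<Rightarrow> nat \<Rightarrow> nat \<Rightarrow> complex" where
  "tp_const n \<alpha> i j t =
     (if 3 \<le> i + j \<and> i + j \<le> n + 1 \<and> i + j - 1 \<le> t \<and> t \<le> n
      then of_int (int j - int i) * \<alpha> (t + 3 - i - j) else 0)"

definition tp_bracket :: "nat \<Rightarrow> (nat \<Rightarrow> complex) \<Rightarrow> (nat \<Rightarrow> complex) \<Rightarrow> (nat \<Rightarrow> complex) \<Rightarrow> (nat \<Rightarrow> complex)" where
  "tp_bracket n \<alpha> x y = (\<lambda>t. if t \<in> {1..n} then
      (\<Sum>i\<in>{1..n}. \<Sum>j\<in>{1..n}. x i * y j * tp_const n \<alpha> i j t) else 0)"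

definition tp_isomorphic :: "nat \<Rightarrow> (nat \<Rightarrow> complex) \<Rightarrow> (nat \<Rightarrow> complex) \<Rightarrow> bool" where
  "tp_isomorphic n \<alpha> \<beta> \<longleftrightarrow>
     (\<exists>f. bij_betw f (vspace n) (vspace n)
        \<and> (\<forall>x\<in>vspace n. \<forall>y\<in>vspace n. f (\<lambda>t. x t + y t) = (\<lambda>t. f x t + f y t))
        \<and> (\<forall>c. \<forall>x\<in>vspace n. f (\<lambda>t. c * x t) = (\<lambda>t. c * f x t))
        \<and> (\<forall>x\<in>vspace n. \<forall>y\<in>vspace n. f (mu_prod n x y) = mu_prod n (f x) (f y))
        \<and> (\<forall>x\<in>vspace n. \<forall>y\<in>vspace n. f (tp_bracket n \<alpha> x y) = tp_bracket n \<beta> (f x) (f y)))"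

end

theory Submission
  imports Defs "HOL-Computational_Algebra.Formal_Power_Series"
begin


definition eqt :: "nat \<Rightarrow> complex fps \<Rightarrow> complex fps \<Rightarrow> bool" where
  "eqt m A B \<longleftrightarrow> (\<forall>k\<le>m. fps_nth A k = fps_nth B k)"

lemma eqt_refl[simp]: "eqt m A A" by (simp add: eqt_def)
lemma eqt_sym: "eqt m A B \<Longrightarrow> eqt m B A" by (simp add: eqt_def)
lemma eqt_trans[trans]: "eqt m A B \<Longrightarrow> eqt m B C \<Longrightarrow> eqt m A C" by (simp add: eqt_def)
lemma eqt_mono: "eqt m A B \<Longrightarrow> k \<le> m \<Longrightarrow> eqt k A B" by (simp add: eqt_def)

lemma eqt_add: "eqt m A B \<Longrightarrow> eqt m C D \<Longrightarrow> eqt m (A + C) (B + D)"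
  by (simp add: eqt_def)
lemma eqt_diff: "eqt m A B \<Longrightarrow> eqt m C D \<Longrightarrow> eqt m (A - C) (B - D)"
  by (simp add: eqt_def)
lemma eqt_mult: "eqt m A B \<Longrightarrow> eqt m C D \<Longrightarrow> eqt m (A * C) (B * D)"
  unfolding eqt_def fps_mult_nth by (auto intro!: sum.cong)
lemma eqt_multL: "eqt m A B \<Longrightarrow> eqt m (C * A) (C * B)"
  by (simp add: eqt_mult)
lemma eqt_multR: "eqt m A B \<Longrightarrow> eqt m (A * C) (B * C)"
  by (simp add: eqt_mult)
lemma eqt_power: "eqt m A B \<Longrightarrow> eqt m (A ^ i) (B ^ i)"
  by (induction i) (simp_all add: eqt_mult)
lemma eqt_Xpow: "eqt m A B \<Longrightarrow> eqt (m + j) (fps_X ^ j * A) (fps_X ^ j * B)"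
  unfolding eqt_def fps_X_power_mult_nth by auto
lemma eqt_XD: "eqt m A B \<Longrightarrow> eqt m (fps_X * fps_deriv A) (fps_X * fps_deriv B)"
  unfolding eqt_def by (auto simp: fps_mult_fps_X_deriv_shift)
lemma eqt_compL: "eqt m A B \<Longrightarrow> eqt m (A oo C) (B oo C)"
  unfolding eqt_def fps_compose_nth by (auto intro!: sum.cong)
lemma eqt_compR: "eqt m A B \<Longrightarrow> eqt m (C oo A) (C oo B)"
proof -
  assume h: "eqt m A B"
  have "\<And>i. eqt m (A ^ i) (B ^ i)" using h by (rule eqt_power)
  then show ?thesis unfolding eqt_def fps_compose_nth by (auto intro!: sum.cong)
qed



definition fromf :: "nat \<Rightarrow> complex fps \<Rightarrow> (nat \<Rightarrow> complex)" where
  "fromf n F = (\<lambda>t. if t \<in> {1..n} then fps_nth F t else 0)"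

definition Gof :: "(nat \<Rightarrow> complex) \<Rightarrow> complex fps" where
  "Gof \<alpha> = Abs_fps (\<lambda>k. \<alpha> (k + 3))"

lemma not_Suc0_le[simp]: "(\<not> Suc 0 \<le> k) = (k = 0)" by auto

lemma vspace_0: "x \<in> vspace n \<Longrightarrow> x 0 = 0" by (simp add: vspace_def)
lemma vspace_gt: "x \<in> vspace n \<Longrightarrow> k > n \<Longrightarrow> x k = 0" by (simp add: vspace_def)

lemma fromf_in: "fromf n F \<in> vspace n" by (simp add: vspace_def fromf_def)
lemma fromf_eqt: "eqt n F G \<Longrightarrow> fromf n F = fromf n G"
  by (auto simp: fromf_def eqt_def fun_eq_iff)
lemma fromf_Abs: "x \<in> vspace n \<Longrightarrow> fromf n (Abs_fps x) = x"
  by (auto simp: fromf_def vspace_def fun_eq_iff)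
lemma eqt_Abs_fromf: "fps_nth F 0 = 0 \<Longrightarrow> eqt n (Abs_fps (fromf n F)) F"
  by (auto simp: fromf_def eqt_def)

lemma sum_ext:
  fixes h :: "nat \<Rightarrow> nat \<Rightarrow> complex"
  assumes x: "x \<in> vspace n" and y: "y \<in> vspace n" and t: "t \<le> n"
    and h: "\<And>i j. t < i + j \<Longrightarrow> h i j = 0"
  shows "(\<Sum>i\<in>{1..n}. \<Sum>j\<in>{1..n}. x i * y j * h i j)
       = (\<Sum>i\<in>{0..t}. \<Sum>j\<in>{0..t}. x i * y j * h i j)"
proof -
  have x0: "x 0 = 0" and y0: "y 0 = 0" using x y by (auto simp: vspace_0)
  have e1: "(\<Sum>j\<in>{1..n}. x i * y j * h i j) = (\<Sum>j\<in>{0..n}. x i * y j * h i j)" for i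
    by (rule sum.mono_neutral_left) (auto simp: y0)
  have e2: "(\<Sum>j\<in>{0..t}. x i * y j * h i j) = (\<Sum>j\<in>{0..n}. x i * y j * h i j)" if "i \<le> t" for i
    by (rule sum.mono_neutral_left) (use t h in auto)
  have "(\<Sum>i\<in>{1..n}. \<Sum>j\<in>{1..n}. x i * y j * h i j)
      = (\<Sum>i\<in>{1..n}. \<Sum>j\<in>{0..n}. x i * y j * h i j)" by (intro sum.cong refl e1)
  also have "\<dots> = (\<Sum>i\<in>{0..n}. \<Sum>j\<in>{0..n}. x i * y j * h i j)"
    by (rule sum.mono_neutral_left) (auto simp: x0)
  also have "\<dots> = (\<Sum>i\<in>{0..t}. \<Sum>j\<in>{0..n}. x i * y j * h i j)"
    by (rule sum.mono_neutral_right) (use t h in \<open>auto intro!: sum.neutral\<close>)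
  also have "\<dots> = (\<Sum>i\<in>{0..t}. \<Sum>j\<in>{0..t}. x i * y j * h i j)"
    by (rule sum.cong) (auto simp: e2)
  finally show ?thesis .
qed

lemma tri_sum:
  fixes g :: "nat \<Rightarrow> nat \<Rightarrow> complex"
  shows "(\<Sum>i\<in>{0..t}. \<Sum>j\<in>{0..t}. if i + j \<le> t then g i j else 0)
       = (\<Sum>k\<in>{0..t}. \<Sum>i\<in>{0..k}. g i (k - i))"
proof -
  have "(\<Sum>i\<in>{0..t}. \<Sum>j\<in>{0..t}. if i + j \<le> t then g i j else 0)
      = (\<Sum>p\<in>{0..t}\<times>{0..t}. if fst p + snd p \<le> t then g (fst p) (snd p) else 0)"
    by (simp add: sum.cartesian_product case_prod_beta)
  also have "\<dots> = (\<Sum>p\<in>{(i,j). i + j \<le> t}. g (fst p) (snd p))"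
    by (rule sum.mono_neutral_cong_right) auto
  also have "\<dots> = (\<Sum>p\<in>{(i,j). i + j \<le> t}. (\<lambda>(i,j). g i j) p)"
    by (simp add: case_prod_beta)
  also have "\<dots> = (\<Sum>k\<le>t. \<Sum>i\<le>k. g i (k - i))"
    by (rule sum.triangle_reindex_eq)
  finally show ?thesis by (simp add: atLeast0AtMost)
qed

lemma prod3_nth:
  "fps_nth (A * B * C) t = (\<Sum>i\<in>{0..t}. \<Sum>j\<in>{0..t}.
     if i + j \<le> t then fps_nth A i * fps_nth B j * fps_nth C (t - i - j) else (0::complex))"
  unfolding tri_sum fps_mult_nth
  by (auto intro!: sum.cong simp: sum_distrib_right)

lemma prod2_nth:
  "fps_nth (A * B) t = (\<Sum>i\<in>{0..t}. \<Sum>j\<in>{0..t}.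
     if i + j \<le> t then fps_nth A i * fps_nth B j * fps_nth 1 (t - i - j) else (0::complex))"
  using prod3_nth[of A B 1 t] by simp

lemma mu_prod_fps:
  assumes x: "x \<in> vspace n" and y: "y \<in> vspace n"
  shows "mu_prod n x y = fromf n (Abs_fps x * Abs_fps y)"
proof
  fix t
  show "mu_prod n x y t = fromf n (Abs_fps x * Abs_fps y) t"
  proof (cases "t \<in> {1..n}")
    case True
    have "mu_prod n x y t = (\<Sum>i\<in>{1..n}. \<Sum>j\<in>{1..n}. x i * y j * (if i + j = t then 1 else 0))"
      using True by (simp add: mu_prod_def if_distrib cong: if_cong)
    also have "\<dots> = (\<Sum>i\<in>{0..t}. \<Sum>j\<in>{0..t}. x i * y j * (if i + j = t then 1 else 0))"
      by (rule sum_ext[OF x y]) (use True in auto)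
    also have "\<dots> = fps_nth (Abs_fps x * Abs_fps y) t"
      unfolding prod2_nth by (auto intro!: sum.cong)
    finally show ?thesis using True by (simp add: fromf_def)
  next
    case False
    then show ?thesis unfolding mu_prod_def fromf_def by auto
  qed
qed



lemma tp_const_eq:
  assumes "1 \<le> i" "1 \<le> j" "t \<le> n" "\<alpha> 2 = 0" "\<alpha> 3 = 0"
  shows "tp_const n \<alpha> i j t = (if i + j \<le> t then (of_nat j - of_nat i) * \<alpha> (t - i - j + 3) else 0)"
proof (cases "i + j \<le> t")
  case True
  show ?thesis
  proof (cases "i + j = 2")
    case True
    then have "i = 1" "j = 1" using assms by auto
    then show ?thesis by (simp add: tp_const_def)
  next
    case False
    then have "3 \<le> i + j" using assms by auto
    moreover have "t + 3 - i - j = t - i - j + 3" "i + j - 1 \<le> t" using True by auto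
    ultimately show ?thesis using True assms by (simp add: tp_const_def of_nat_diff)
  qed
next
  case False
  show ?thesis
  proof (cases "i + j = t + 1")
    case True
    then have "t + 3 - i - j = 2" by auto
    then show ?thesis using False assms by (simp add: tp_const_def)
  next
    case False2: False
    then have "\<not> i + j - 1 \<le> t" using False by auto
    then show ?thesis using False by (simp add: tp_const_def)
  qed
qed

lemma bracket_fps:
  assumes x: "x \<in> vspace n" and y: "y \<in> vspace n" and a2: "\<alpha> 2 = 0" and a3: "\<alpha> 3 = 0"
  shows "tp_bracket n \<alpha> x y = fromf n ((Abs_fps x * (fps_X * fps_deriv (Abs_fps y))
            - Abs_fps y * (fps_X * fps_deriv (Abs_fps x))) * Gof \<alpha>)"
proof
  fix t
  show "tp_bracket n \<alpha> x y t = fromf n ((Abs_fps x * (fps_X * fps_deriv (Abs_fps y))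
            - Abs_fps y * (fps_X * fps_deriv (Abs_fps x))) * Gof \<alpha>) t"
  proof (cases "t \<in> {1..n}")
    case True
    define h where "h i j = (if i + j \<le> t then (of_nat j - of_nat i) * \<alpha> (t - i - j + 3) else (0::complex))" for i j
    have "tp_bracket n \<alpha> x y t = (\<Sum>i\<in>{1..n}. \<Sum>j\<in>{1..n}. x i * y j * h i j)"
      using True unfolding tp_bracket_def h_def
      by (auto intro!: sum.cong simp: tp_const_eq a2 a3)
    also have "\<dots> = (\<Sum>i\<in>{0..t}. \<Sum>j\<in>{0..t}. x i * y j * h i j)"
      by (rule sum_ext[OF x y]) (use True in \<open>auto simp: h_def\<close>)
    also have "\<dots> = (\<Sum>i\<in>{0..t}. \<Sum>j\<in>{0..t}. if i + j \<le> t then x i * (of_nat j * y j) * \<alpha> (t - i - j + 3) else 0)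
       - (\<Sum>i\<in>{0..t}. \<Sum>j\<in>{0..t}. if j + i \<le> t then y j * (of_nat i * x i) * \<alpha> (t - j - i + 3) else 0)"
      unfolding sum_subtractf[symmetric] h_def
      by (intro sum.cong refl) (auto simp: algebra_simps add.commute)
    also have "\<dots> = (\<Sum>i\<in>{0..t}. \<Sum>j\<in>{0..t}. if i + j \<le> t then x i * (of_nat j * y j) * \<alpha> (t - i - j + 3) else 0)
       - (\<Sum>i\<in>{0..t}. \<Sum>j\<in>{0..t}. if i + j \<le> t then y i * (of_nat j * x j) * \<alpha> (t - i - j + 3) else 0)"
      by (subst (2) sum.swap) simp
    also have "\<dots> = fps_nth ((Abs_fps x * (fps_X * fps_deriv (Abs_fps y))
            - Abs_fps y * (fps_X * fps_deriv (Abs_fps x))) * Gof \<alpha>) t"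
      unfolding left_diff_distrib fps_sub_nth prod3_nth
      by (intro arg_cong2[where f="(-)"] sum.cong refl) (auto simp: Gof_def)
    finally show ?thesis using True by (simp add: fromf_def)
  next
    case False
    then show ?thesis unfolding tp_bracket_def fromf_def by auto
  qed
qed



lemma fps_inv_0: "fps_nth (fps_inv a) 0 = (0::complex)"
  by (simp add: fps_inv_def)

lemma Abs_add: "Abs_fps (\<lambda>t. x t + y t) = Abs_fps x + Abs_fps y"
  by (simp add: fps_eq_iff)
lemma Abs_smult: "Abs_fps (\<lambda>t. c * x t) = fps_const (c::complex) * Abs_fps x"
  by (rule fps_ext) (subst fps_mult_left_const_nth, simp)
lemma fromf_add: "fromf n (A + B) = (\<lambda>t. fromf n A t + fromf n B t)"
  by (simp add: fromf_def fun_eq_iff)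
lemma fromf_smult: "fromf n (fps_const c * A) = (\<lambda>t. c * fromf n A t)"
  by (simp add: fromf_def fun_eq_iff)

lemma ring_id1: "(a*(p*b) - c*(p*d))*g = (a*b - c*d)*(p*(g::'a::comm_ring))"
  by (simp add: algebra_simps)
lemma ring_id2: "(a*b - c*d)*(x*p*g) = (a*(x*(b*p)) - c*(x*(d*p)))*(g::'a::comm_ring)"
  by (simp add: algebra_simps)

lemma GL:
  fixes \<phi> :: "complex fps"
  assumes a2: "\<alpha> 2 = 0" and a3: "\<alpha> 3 = 0" and b2: "\<beta> 2 = 0" and b3: "\<beta> 3 = 0"
    and p0: "fps_nth \<phi> 0 = 0" and p1: "fps_nth \<phi> 1 \<noteq> 0"
    and E: "eqt n (\<phi> * (Gof \<alpha> oo \<phi>)) (fps_X * fps_deriv \<phi> * Gof \<beta>)"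
  shows "tp_isomorphic n \<alpha> \<beta>"
proof -
  define f where "f x = fromf n (Abs_fps x oo \<phi>)" for x
  define \<psi> where "\<psi> = fps_inv \<phi>"
  define g where "g x = fromf n (Abs_fps x oo \<psi>)" for x
  have q0: "fps_nth \<psi> 0 = 0" by (simp add: \<psi>_def fps_inv_0)
  have fin: "f x \<in> vspace n" for x by (simp add: f_def fromf_in)
  have gin: "g x \<in> vspace n" for x by (simp add: g_def fromf_in)
  have fE: "eqt n (Abs_fps (f x)) (Abs_fps x oo \<phi>)" if "x \<in> vspace n" for x
    unfolding f_def by (rule eqt_Abs_fromf) (use that in \<open>simp add: vspace_0\<close>)
  have gE: "eqt n (Abs_fps (g x)) (Abs_fps x oo \<psi>)" if "x \<in> vspace n" for x
    unfolding g_def by (rule eqt_Abs_fromf) (use that in \<open>simp add: vspace_0\<close>)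
  have bij: "bij_betw f (vspace n) (vspace n)"
  proof (rule bij_betw_byWitness[where f'=g])
    show "\<forall>a\<in>vspace n. g (f a) = a"
    proof
      fix a assume a: "a \<in> vspace n"
      have "g (f a) = fromf n ((Abs_fps a oo \<phi>) oo \<psi>)"
        unfolding g_def by (rule fromf_eqt, rule eqt_compL, rule fE[OF a])
      also have "\<dots> = fromf n (Abs_fps a oo (\<phi> oo \<psi>))"
        by (simp add: fps_compose_assoc q0 p0)
      also have "\<dots> = a" unfolding \<psi>_def fps_inv_right[OF p0 p1] fps_compose_fps_X by (rule fromf_Abs[OF a])
      finally show "g (f a) = a" .
    qed
    show "\<forall>a\<in>vspace n. f (g a) = a"
    proof
      fix a assume a: "a \<in> vspace n"
      have "f (g a) = fromf n ((Abs_fps a oo \<psi>) oo \<phi>)"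
        unfolding f_def by (rule fromf_eqt, rule eqt_compL, rule gE[OF a])
      also have "\<dots> = fromf n (Abs_fps a oo (\<psi> oo \<phi>))"
        by (simp add: fps_compose_assoc q0 p0)
      also have "\<dots> = a" unfolding \<psi>_def fps_inv[OF p0 p1] fps_compose_fps_X by (rule fromf_Abs[OF a])
      finally show "f (g a) = a" .
    qed
  qed (use fin gin in auto)
  have add: "f (\<lambda>t. x t + y t) = (\<lambda>t. f x t + f y t)" for x y
    by (simp add: f_def Abs_add fps_compose_add_distrib fromf_add)
  have smult: "f (\<lambda>t. c * x t) = (\<lambda>t. c * f x t)" for c x
    by (simp add: f_def Abs_smult fps_const_mult_apply_left[symmetric] fromf_smult)
  have mu: "f (mu_prod n x y) = mu_prod n (f x) (f y)" if x: "x \<in> vspace n" and y: "y \<in> vspace n" for x y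
  proof -
    have "f (mu_prod n x y) = fromf n ((Abs_fps x * Abs_fps y) oo \<phi>)"
      unfolding f_def mu_prod_fps[OF x y]
      by (rule fromf_eqt, rule eqt_compL, rule eqt_Abs_fromf) (use x y in \<open>simp add: vspace_0\<close>)
    also have "\<dots> = fromf n ((Abs_fps x oo \<phi>) * (Abs_fps y oo \<phi>))"
      by (simp add: fps_compose_mult_distrib p0)
    also have "\<dots> = fromf n (Abs_fps (f x) * Abs_fps (f y))"
      by (rule fromf_eqt, rule eqt_mult, (rule eqt_sym, rule fE, fact)+)
    also have "\<dots> = mu_prod n (f x) (f y)"
      by (simp add: mu_prod_fps fin)
    finally show ?thesis .
  qed
  have br: "f (tp_bracket n \<alpha> x y) = tp_bracket n \<beta> (f x) (f y)"
    if x: "x \<in> vspace n" and y: "y \<in> vspace n" for x y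
  proof -
    define X where "X = Abs_fps x"
    define Y where "Y = Abs_fps y"
    define W where "W = (X oo \<phi>) * (fps_deriv Y oo \<phi>) - (Y oo \<phi>) * (fps_deriv X oo \<phi>)"
    have "f (tp_bracket n \<alpha> x y) = fromf n (((X * (fps_X * fps_deriv Y)
            - Y * (fps_X * fps_deriv X)) * Gof \<alpha>) oo \<phi>)"
      unfolding f_def bracket_fps[OF x y a2 a3] X_def Y_def
      by (rule fromf_eqt, rule eqt_compL, rule eqt_Abs_fromf) (use x y in \<open>simp add: vspace_0\<close>)
    also have "\<dots> = fromf n (((X oo \<phi>) * (\<phi> * (fps_deriv Y oo \<phi>))
            - (Y oo \<phi>) * (\<phi> * (fps_deriv X oo \<phi>))) * (Gof \<alpha> oo \<phi>))"
      by (simp add: fps_compose_mult_distrib fps_compose_sub_distrib p0)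
    also have "\<dots> = fromf n (W * (\<phi> * (Gof \<alpha> oo \<phi>)))"
      unfolding W_def by (simp only: ring_id1)
    also have "\<dots> = fromf n (W * (fps_X * fps_deriv \<phi> * Gof \<beta>))"
      by (rule fromf_eqt, rule eqt_multL, rule E)
    also have "\<dots> = fromf n (((X oo \<phi>) * (fps_X * fps_deriv (Y oo \<phi>))
            - (Y oo \<phi>) * (fps_X * fps_deriv (X oo \<phi>))) * Gof \<beta>)"
      unfolding W_def fps_compose_deriv[OF p0] by (simp only: ring_id2)
    also have "\<dots> = fromf n ((Abs_fps (f x) * (fps_X * fps_deriv (Abs_fps (f y)))
            - Abs_fps (f y) * (fps_X * fps_deriv (Abs_fps (f x)))) * Gof \<beta>)"
      using eqt_sym[OF fE[OF x]] eqt_sym[OF fE[OF y]] unfolding X_def Y_def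
      by (intro fromf_eqt eqt_multR eqt_diff eqt_mult eqt_XD)
    also have "\<dots> = tp_bracket n \<beta> (f x) (f y)"
      by (simp add: bracket_fps fin b2 b3)
    finally show ?thesis .
  qed
  show ?thesis unfolding tp_isomorphic_def
    by (intro exI[of _ f] conjI ballI allI bij add smult mu br)
qed



lemma iso_trans:
  assumes "tp_isomorphic n \<alpha> \<beta>" "tp_isomorphic n \<beta> \<gamma>"
  shows "tp_isomorphic n \<alpha> \<gamma>"
proof -
  obtain f1 where f1: "bij_betw f1 (vspace n) (vspace n)"
    "\<forall>x\<in>vspace n. \<forall>y\<in>vspace n. f1 (\<lambda>t. x t + y t) = (\<lambda>t. f1 x t + f1 y t)"
    "\<forall>c. \<forall>x\<in>vspace n. f1 (\<lambda>t. c * x t) = (\<lambda>t. c * f1 x t)"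
    "\<forall>x\<in>vspace n. \<forall>y\<in>vspace n. f1 (mu_prod n x y) = mu_prod n (f1 x) (f1 y)"
    "\<forall>x\<in>vspace n. \<forall>y\<in>vspace n. f1 (tp_bracket n \<alpha> x y) = tp_bracket n \<beta> (f1 x) (f1 y)"
    using assms(1) unfolding tp_isomorphic_def by blast
  obtain f2 where f2: "bij_betw f2 (vspace n) (vspace n)"
    "\<forall>x\<in>vspace n. \<forall>y\<in>vspace n. f2 (\<lambda>t. x t + y t) = (\<lambda>t. f2 x t + f2 y t)"
    "\<forall>c. \<forall>x\<in>vspace n. f2 (\<lambda>t. c * x t) = (\<lambda>t. c * f2 x t)"
    "\<forall>x\<in>vspace n. \<forall>y\<in>vspace n. f2 (mu_prod n x y) = mu_prod n (f2 x) (f2 y)"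
    "\<forall>x\<in>vspace n. \<forall>y\<in>vspace n. f2 (tp_bracket n \<beta> x y) = tp_bracket n \<gamma> (f2 x) (f2 y)"
    using assms(2) unfolding tp_isomorphic_def by blast
  have in1: "f1 x \<in> vspace n" if "x \<in> vspace n" for x
    by (rule bij_betw_apply[OF f1(1) that])
  show ?thesis unfolding tp_isomorphic_def
    apply (rule exI[of _ "f2 \<circ> f1"])
    using f1 f2 in1 by (auto intro: bij_betw_trans)
qed

lemma scale_iso:
  fixes c :: complex
  assumes a2: "\<alpha> 2 = 0" and a3: "\<alpha> 3 = 0" and c: "c \<noteq> 0"
  shows "tp_isomorphic n \<alpha> (\<lambda>k. if k \<le> 3 then 0 else c ^ (k - 3) * \<alpha> k)"
proof (rule GL[where \<phi> = "fps_const c * fps_X"])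
  have "Gof (\<lambda>k. if k \<le> 3 then 0 else c ^ (k - 3) * \<alpha> k) = Gof \<alpha> oo (fps_const c * fps_X)"
    unfolding fps_compose_linear Gof_def by (rule fps_ext) (simp add: a3)
  then show "eqt n (fps_const c * fps_X * (Gof \<alpha> oo fps_const c * fps_X))
     (fps_X * fps_deriv (fps_const c * fps_X) * Gof (\<lambda>k. if k \<le> 3 then 0 else c ^ (k - 3) * \<alpha> k))"
    by (simp add: mult_ac)
qed (use a2 a3 c in auto)



lemma ring_id3: "(1 + d*P) * A * (1 - c*d*P) = A + (d - c*d)*(P*A) - c*d*d*(P*(P*(A::'a::comm_ring_1)))"
  by (simp add: algebra_simps)
lemma ring_id4: "(1 + c*d*P) * (1 - c*d*P) = 1 - (c*d)*(c*d)*(P*(P::'a::comm_ring_1))"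
  by (simp add: algebra_simps)

lemma kill_iso:
  fixes \<alpha> :: "nat \<Rightarrow> complex" and N :: nat
  assumes a2: "\<alpha> 2 = 0" and a3: "\<alpha> 3 = 0" and N3: "3 \<le> N" and g1: "fps_nth (Gof \<alpha>) 1 = 1"
  shows "\<exists>\<beta>. \<beta> 2 = 0 \<and> \<beta> 3 = 0 \<and> (\<forall>k<N. fps_nth (Gof \<beta>) k = fps_nth (Gof \<alpha>) k)
             \<and> fps_nth (Gof \<beta>) N = 0 \<and> tp_isomorphic n \<alpha> \<beta>"
proof -
  define G where "G = Gof \<alpha>"
  define \<delta> where "\<delta> = fps_nth G N / (of_nat N - 2)"
  define d where "d = fps_const \<delta>"
  define cN where "cN = fps_const (of_nat N :: complex)"
  define P where "P = (fps_X :: complex fps) ^ (N - 1)"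
  define u where "u = 1 + d * P"
  define \<phi> where "\<phi> = fps_X * u"
  define \<phi>d where "\<phi>d = 1 + cN * d * P"
  define H where "H = u * (G oo \<phi>) * inverse \<phi>d"
  define \<beta> where "\<beta> k = (if k \<le> 3 then 0 else fps_nth H (k - 3))" for k
  have G0: "fps_nth G 0 = 0" by (simp add: G_def Gof_def a3)
  have G1: "fps_nth G 1 = 1" using g1 by (simp add: G_def)
  have XP: "fps_X * P = fps_X ^ N" unfolding P_def using N3 by (cases N) auto
  have \<phi>X: "\<phi> = fps_X + d * fps_X ^ N"
    unfolding \<phi>_def u_def by (simp add: distrib_left XP[symmetric] mult_ac)
  have unth: "fps_nth u k = (if k = 0 then 1 else 0) + (if k = N - 1 then \<delta> else 0)" for k
    using N3 by (simp add: u_def d_def P_def)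
  have p0: "fps_nth \<phi> 0 = 0" by (simp add: \<phi>_def)
  have p1: "fps_nth \<phi> 1 = 1" using N3 by (simp add: \<phi>_def unth)
  have deriv: "fps_deriv \<phi> = \<phi>d"
  proof (rule fps_ext)
    fix k
    show "fps_nth (fps_deriv \<phi>) k = fps_nth \<phi>d k"
      using N3 by (auto simp: \<phi>_def unth \<phi>d_def cN_def d_def P_def algebra_simps)
  qed
  have \<phi>d0: "fps_nth \<phi>d 0 = 1" using N3 by (simp add: \<phi>d_def P_def)
  have Hexact: "\<phi> * (G oo \<phi>) = fps_X * \<phi>d * H"
  proof -
    have "fps_X * \<phi>d * H = fps_X * u * (G oo \<phi>) * (\<phi>d * inverse \<phi>d)"
      unfolding H_def by (simp add: mult_ac)
    also have "\<phi>d * inverse \<phi>d = 1" using \<phi>d0 by (intro inverse_mult_eq_1') simp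
    finally show ?thesis by (simp add: \<phi>_def)
  qed
  have H0: "fps_nth H 0 = 0" by (simp add: H_def G0)
  have Gb: "Gof \<beta> = H"
    by (rule fps_ext) (auto simp: Gof_def \<beta>_def H0)
  have iso: "tp_isomorphic n \<alpha> \<beta>"
  proof (rule GL[OF a2 a3 _ _ p0])
    show "\<beta> 2 = 0" "\<beta> 3 = 0" by (simp_all add: \<beta>_def)
    show "fps_nth \<phi> 1 \<noteq> 0" using p1 by simp
    show "eqt n (\<phi> * (Gof \<alpha> oo \<phi>)) (fps_X * fps_deriv \<phi> * Gof \<beta>)"
      using Hexact by (simp add: deriv Gb G_def)
  qed
  define R where "R = Abs_fps (\<lambda>k. fps_nth G (k + 2))"
  have Gdec: "G = fps_X + fps_X ^ 2 * R"
  proof (rule fps_ext)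
    fix k show "fps_nth G k = fps_nth (fps_X + fps_X ^ 2 * R) k"
      using G0 G1 by (cases k) (auto simp: R_def fps_X_power_mult_nth fps_X_nth)
  qed
  have Gcomp: "G oo \<phi> = \<phi> + fps_X ^ 2 * (u ^ 2 * (R oo \<phi>))"
  proof -
    have "G oo \<phi> = \<phi> + \<phi> ^ 2 * (R oo \<phi>)"
      apply (subst Gdec)
      by (simp add: fps_compose_add_distrib fps_compose_mult_distrib p0 fps_compose_power[OF p0, symmetric])
    then show ?thesis by (simp add: \<phi>_def power_mult_distrib mult_ac)
  qed
  have uE: "eqt (N - 2) u 1"
    unfolding eqt_def using N3 by (auto simp: unth)
  have \<phi>E: "eqt (N - 2) \<phi> fps_X"
    unfolding eqt_def using N3 by (auto simp: \<phi>_def unth fps_X_nth)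
  have "eqt (N - 2) (u ^ 2 * (R oo \<phi>)) (1 ^ 2 * (R oo fps_X))"
    by (intro eqt_mult eqt_power uE eqt_compR \<phi>E)
  then have "eqt (N - 2 + 2) (fps_X ^ 2 * (u ^ 2 * (R oo \<phi>))) (fps_X ^ 2 * R)"
    using eqt_Xpow by fastforce
  moreover have "N - 2 + 2 = N" using N3 by simp
  ultimately have "eqt N (fps_X ^ 2 * (u ^ 2 * (R oo \<phi>))) (fps_X ^ 2 * R)"
    by metis
  then have "eqt N (\<phi> + fps_X ^ 2 * (u ^ 2 * (R oo \<phi>))) (\<phi> + fps_X ^ 2 * R)"
    by (intro eqt_add eqt_refl)
  then have C1: "eqt N (G oo \<phi>) (G + d * fps_X ^ N)"
    unfolding Gcomp by (simp add: \<phi>X Gdec add_ac)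
  define Q where "Q = 1 - cN * d * P"
  have PP: "eqt N (A * (P * P)) 0" for A
  proof -
    have "P * P = fps_X ^ (2 * N - 2)" unfolding P_def
      using N3 by (simp add: power_add[symmetric])
    then show ?thesis unfolding eqt_def using N3 by (auto simp: fps_X_power_mult_right_nth)
  qed
  have "eqt N (\<phi>d * Q) (1 - 0)"
    unfolding \<phi>d_def Q_def ring_id4 by (intro eqt_diff eqt_refl PP)
  then have \<phi>dQ: "eqt N (\<phi>d * Q) 1" by simp
  have C2: "eqt N (inverse \<phi>d) Q"
  proof -
    have "eqt N (inverse \<phi>d * 1) (inverse \<phi>d * (\<phi>d * Q))"
      by (rule eqt_multL, rule eqt_sym, rule \<phi>dQ)
    also have "inverse \<phi>d * (\<phi>d * Q) = Q"
      using \<phi>d0 by (simp add: mult.assoc[symmetric] inverse_mult_eq_1)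
    finally show ?thesis by simp
  qed
  define A where "A = G + d * fps_X ^ N"
  have PA: "eqt N (P * A) (fps_X ^ N)"
    unfolding eqt_def
  proof (intro allI impI)
    fix k assume k: "k \<le> N"
    have "k < N - 1 \<or> k = N - 1 \<or> k = N" using k by auto
    then show "fps_nth (P * A) k = fps_nth (fps_X ^ N) k"
      using N3 G0 G1 by (auto simp: P_def A_def fps_X_power_mult_nth d_def)
  qed
  have PPA: "eqt N (P * (P * A)) 0"
    unfolding eqt_def using N3 by (auto simp: P_def fps_X_power_mult_nth)
  have "eqt N H (u * A * Q)"
    unfolding H_def A_def by (intro eqt_mult eqt_refl C1 C2)
  also have "u * A * Q = A + (d - cN*d)*(P*A) - cN*d*d*(P*(P*A))"
    unfolding u_def Q_def by (rule ring_id3)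
  also have "eqt N \<dots> (A + (d - cN*d)*fps_X ^ N - cN*d*d*0)"
    by (intro eqt_add eqt_diff eqt_multL eqt_refl PA PPA)
  finally have HE: "eqt N H (G + d * fps_X ^ N + (d - cN*d) * fps_X ^ N)"
    by (simp add: A_def)
  have Hk: "fps_nth H k = fps_nth G k + (if k = N then (2 - of_nat N) * \<delta> else 0)" if "k \<le> N" for k
    using HE that unfolding eqt_def by (auto simp: d_def cN_def algebra_simps)
  have "(of_nat N - 2 :: complex) \<noteq> 0"
  proof
    assume "(of_nat N - 2 :: complex) = 0"
    then have "(of_nat N :: complex) = of_nat 2" by simp
    then have "N = 2" by (simp only: of_nat_eq_iff)
    then show False using N3 by simp
  qed
  then have "fps_nth H N = 0"
    using Hk[of N] by (simp add: \<delta>_def field_simps)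
  then show ?thesis
    using Hk iso Gb by (intro exI[of _ \<beta>]) (auto simp: \<beta>_def G_def)
qed



theorem mainTheorem9:
  fixes n :: nat and \<alpha> :: "nat \<Rightarrow> complex"
  assumes "n \<ge> 4" and "\<alpha> 2 = 0" and "\<alpha> 3 = 0" and "\<alpha> 4 \<noteq> 0"
  shows "\<exists>a::complex. tp_isomorphic n \<alpha>
           (\<lambda>i. if i = 4 then 1 else if i = 5 then a else 0)"
proof -
  define c where "c = 1 / \<alpha> 4"
  define \<beta>1 where "\<beta>1 = (\<lambda>k. if k \<le> 3 then 0 else c ^ (k - 3) * \<alpha> k)"
  define a where "a = fps_nth (Gof \<beta>1) 2"
  have c0: "c \<noteq> 0" using assms(4) by (simp add: c_def)
  have iso1: "tp_isomorphic n \<alpha> \<beta>1"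
    unfolding \<beta>1_def by (rule scale_iso[OF assms(2,3) c0])
  have b11: "fps_nth (Gof \<beta>1) 1 = 1" using assms(4) by (simp add: Gof_def \<beta>1_def c_def)
  have ind: "\<exists>\<beta>. \<beta> 2 = 0 \<and> \<beta> 3 = 0 \<and> fps_nth (Gof \<beta>) 1 = 1 \<and> fps_nth (Gof \<beta>) 2 = a
      \<and> (\<forall>k. 3 \<le> k \<and> k < M + 3 \<longrightarrow> fps_nth (Gof \<beta>) k = 0) \<and> tp_isomorphic n \<alpha> \<beta>" for M
  proof (induction M)
    case 0
    show ?case using iso1 b11 by (intro exI[of _ \<beta>1]) (auto simp: a_def \<beta>1_def)
  next
    case (Suc M)
    then obtain \<beta> where b: "\<beta> 2 = 0" "\<beta> 3 = 0" "fps_nth (Gof \<beta>) 1 = 1" "fps_nth (Gof \<beta>) 2 = a"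
      "\<forall>k. 3 \<le> k \<and> k < M + 3 \<longrightarrow> fps_nth (Gof \<beta>) k = 0" "tp_isomorphic n \<alpha> \<beta>" by blast
    obtain \<gamma> where g: "\<gamma> 2 = 0" "\<gamma> 3 = 0" "\<forall>k<M + 3. fps_nth (Gof \<gamma>) k = fps_nth (Gof \<beta>) k"
      "fps_nth (Gof \<gamma>) (M + 3) = 0" "tp_isomorphic n \<beta> \<gamma>"
      using kill_iso[OF b(1,2) _ b(3), of "M + 3" n] by auto
    have "\<forall>k. 3 \<le> k \<and> k < Suc M + 3 \<longrightarrow> fps_nth (Gof \<gamma>) k = 0"
    proof (intro allI impI)
      fix k assume k: "3 \<le> k \<and> k < Suc M + 3"
      show "fps_nth (Gof \<gamma>) k = 0"
      proof (cases "k = M + 3")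
        case True then show ?thesis using g(4) by simp
      next
        case False then show ?thesis using k g(3) b(5) by auto
      qed
    qed
    moreover have "fps_nth (Gof \<gamma>) 1 = 1" "fps_nth (Gof \<gamma>) 2 = a" using g(3) b(3,4) by auto
    moreover have "tp_isomorphic n \<alpha> \<gamma>" by (rule iso_trans[OF b(6) g(5)])
    ultimately show ?case using g(1,2) by blast
  qed
  obtain \<beta> where b: "\<beta> 2 = 0" "\<beta> 3 = 0" "fps_nth (Gof \<beta>) 1 = 1" "fps_nth (Gof \<beta>) 2 = a"
      "\<forall>k. 3 \<le> k \<and> k < n + 3 \<longrightarrow> fps_nth (Gof \<beta>) k = 0" "tp_isomorphic n \<alpha> \<beta>"
    using ind[of n] by blast
  define T where "T = (\<lambda>i::nat. if i = 4 then 1 else if i = 5 then a else (0::complex))"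
  have "tp_isomorphic n \<beta> T"
  proof (rule GL[where \<phi> = fps_X])
    have "eqt n (Gof \<beta>) (Gof T)"
      unfolding eqt_def
    proof (intro allI impI)
      fix k assume k: "k \<le> n"
      have "k = 0 \<or> k = 1 \<or> k = 2 \<or> (3 \<le> k \<and> k < n + 3)" using k by auto
      then show "fps_nth (Gof \<beta>) k = fps_nth (Gof T) k"
        using b by (auto simp: T_def Gof_def)
    qed
    then show "eqt n (fps_X * (Gof \<beta> oo fps_X)) (fps_X * fps_deriv fps_X * Gof T)"
      by (simp add: eqt_multL)
  qed (use b in \<open>auto simp: T_def\<close>)
  then show ?thesis using iso_trans[OF b(6)] unfolding T_def by blast
qed


end
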